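(* Let $(X,\sigma,\tau)$ be a Lorentzian metric space which is separable, chronologically dense and satisfies the S-property. Then $(\overline{X},\sigma_{chr},\overline{\tau})$ is also a Lorentzian metric space; that is, $\overline{\tau}:\overline{X}\times\overline{X}\to[0,\infty]$ is lower semicontinuous with respect to $\sigma_{chr}$, and $\overline{\tau}(a,c)\geq\overline{\tau}(a,b)+\overline{\tau}(b,c)$ whenever $\overline{\tau}(a,b)>0$ and $\overline{\tau}(b,c)>0$.
   Context: A Lorentzian metric space $(X,\sigma,\tau)$ is a topological space $(X,\sigma)$ together with a function $\tau:X\times X\to[0,\infty]$ which is lower semicontinuous (with respect to the product topology) and satisfies $\tau(x,z)\geq\tau(x,y)+\tau(y,z)$ whenever $\tau(x,y)>0$ and $\tau(y,z)>0$. Write $x\ll y$ iff $\tau(x,y)>0$, $I^+(x)=\{y:x\ll y\}$, $I^-(x)=\{y:y\ll x\}$, and $I^\pm[A]=\bigcup_{a\in A}I^\pm(a)$ for $A\subset X$. A future (resp. past) chain is a sequence $\{x_n\}$ with $x_n\ll x_{n+1}$ (resp. $x_{n+1}\ll x_n$) for all $n$. $X$ is separable if there is a countable $S\subset X$ such that whenever $x\ll y$ there is $s\in S$ with $x\ll s\ll y$. $X$ is chronologically dense if every $x$ with $I^-(x)\neq\emptyset$ is the $\sigma$-limit of some future chain, and every $x$ with $I^+(x)\neq\emptyset$ is the $\sigma$-limit of some past chain. A past set is $P\subset X$ with $P=I^-[P]$; the common past of $S\subset X$ is $\downarrow S=I^-[\{p: p\ll q\ \forall q\in S\}]$. An IP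 (indecomposable past set) is a past set that cannot be written as the union of two proper subsets which are both past sets; a PIP is an IP of the form $I^-(p)$. Future sets, $\uparrow S$, IFs and PIFs are defined dually (exchanging past and future). For a nonempty IP $P$ and a nonempty IF $F$, write $P\sim_S F$ iff $P$ is a maximal IP contained in $\downarrow F$ and $F$ is a maximal IF contained in $\uparrow P$; write $P\sim_S\emptyset$ (resp. $\emptyset\sim_S F$) if the nonempty IP $P$ (resp. nonempty IF $F$) is not S-related to any nonempty IF (resp. IP). $X$ satisfies the S-property if for every $x\in X$, $I^-(x)\sim_S I^+(x)$, no PIF other than $I^+(x)$ is S-related to $I^-(x)$, and no PIP other than $I^-(x)$ is S-related to $I^+(x)$. The c-completion is $\overline{X}=\{(P,F): P\sim_S F\}$ (with $P$ an IP or $\emptyset$, $F$ an IF or $\emptyset$), with $\mathbf{i}(x)=(I^-(x),I^+(x))$ and c-boundary $\partial X=\overline{X}\setminus\mathbf{i}(X)$. For a sequence $\{(P_n,F_n)\}$ in $\overline{X}$, define $L(\{(P_n,F_n)\})$ as the set of $(P,F)\in\overline{X}$ such that: if $P\neq\emptyset$, then $P\subset LI(P_n)$ and $P$ is a maximal IP contained in $LS(P_n)$; and if $F\neq\emptyset$, then $F\subset LI(F_n)$ and $F$ is a maximal IF contained in $LS(F_n)$. Here $LI(A_n)=\bigcup_n\bigcap_{k\geq n}A_k$ and $LS(A_n)=\bigcap_n\bigcup_{k\geq n}A_k$. The chronological topology $\sigma_{chr}$ on $\overline{X}$ is the topology whose closed sets are the $C\subset\overline{X}$ with $L(s)\subset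 C$ for every sequence $s$ in $C$. For $(P,F),(P',F')\in\overline{X}$, $\overline{\tau}((P,F),(P',F'))=0$ if $F=\emptyset$ or $P'=\emptyset$, and otherwise $\overline{\tau}((P,F),(P',F'))=\lim_n\tau(q_n,p'_n)$, where $\{q_n\}$ is a past chain with $F=I^+[\{q_n\}]$ and $\{p'_n\}$ is a future chain with $P'=I^-[\{p'_n\}]$. (In a separable $X$, every nonempty IP is the past of a future chain and every nonempty IF is the future of a past chain; the limit exists and is independent of the chains.) *)

theory Defs
  imports "HOL-Analysis.Analysis" "HOL-Library.Extended_Nonnegative_Real"
begin

definition lsc_on :: "'a topology \<Rightarrow> ('a \<Rightarrow> ennreal) \<Rightarrow> bool" where
  "lsc_on T f \<longleftrightarrow> (\<forall>x\<in>topspace T. \<forall>r. r < f x \<longrightarrow>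
      (\<exists>U. openin T U \<and> x \<in> U \<and> (\<forall>y\<in>U. r < f y)))"

definition lorentzian_metric_space :: "'a topology \<Rightarrow> ('a \<Rightarrow> 'a \<Rightarrow> ennreal) \<Rightarrow> bool" where
  "lorentzian_metric_space T t \<longleftrightarrow>
     lsc_on (prod_topology T T) (\<lambda>(x, y). t x y) \<and>
     (\<forall>x\<in>topspace T. \<forall>y\<in>topspace T. \<forall>z\<in>topspace T.
        0 < t x y \<and> 0 < t y z \<longrightarrow> t x y + t y z \<le> t x z)"

definition chr :: "('a \<Rightarrow> 'a \<Rightarrow> ennreal) \<Rightarrow> 'a \<Rightarrow> 'a \<Rightarrow> bool" where
  "chr t x y \<longleftrightarrow> 0 < t x y"

definition Ifut :: "('a \<Rightarrow> 'a \<Rightarrow> ennreal) \<Rightarrow> 'a \<Rightarrow> 'a set" where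
  "Ifut t x = {y. chr t x y}"

definition Ipast :: "('a \<Rightarrow> 'a \<Rightarrow> ennreal) \<Rightarrow> 'a \<Rightarrow> 'a set" where
  "Ipast t x = {y. chr t y x}"

definition Ifut_set :: "('a \<Rightarrow> 'a \<Rightarrow> ennreal) \<Rightarrow> 'a set \<Rightarrow> 'a set" where
  "Ifut_set t A = (\<Union>a\<in>A. Ifut t a)"

definition Ipast_set :: "('a \<Rightarrow> 'a \<Rightarrow> ennreal) \<Rightarrow> 'a set \<Rightarrow> 'a set" where
  "Ipast_set t A = (\<Union>a\<in>A. Ipast t a)"

definition future_chain :: "('a \<Rightarrow> 'a \<Rightarrow> ennreal) \<Rightarrow> (nat \<Rightarrow> 'a) \<Rightarrow> bool" where
  "future_chain t x \<longleftrightarrow> (\<forall>n. chr t (x n) (x (Suc n)))"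

definition past_chain :: "('a \<Rightarrow> 'a \<Rightarrow> ennreal) \<Rightarrow> (nat \<Rightarrow> 'a) \<Rightarrow> bool" where
  "past_chain t x \<longleftrightarrow> (\<forall>n. chr t (x (Suc n)) (x n))"

definition separable_lms :: "('a \<Rightarrow> 'a \<Rightarrow> ennreal) \<Rightarrow> bool" where
  "separable_lms t \<longleftrightarrow> (\<exists>S. countable S \<and>
      (\<forall>x y. chr t x y \<longrightarrow> (\<exists>s\<in>S. chr t x s \<and> chr t s y)))"

definition chronologically_dense :: "'a topology \<Rightarrow> ('a \<Rightarrow> 'a \<Rightarrow> ennreal) \<Rightarrow> bool" where
  "chronologically_dense T t \<longleftrightarrow>
     (\<forall>x\<in>topspace T. Ipast t x \<noteq> {} \<longrightarrow>
        (\<exists>c. future_chain t c \<and> range c \<subseteq> topspace T \<and> limitin T c x sequentially)) \<and>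
     (\<forall>x\<in>topspace T. Ifut t x \<noteq> {} \<longrightarrow>
        (\<exists>c. past_chain t c \<and> range c \<subseteq> topspace T \<and> limitin T c x sequentially))"

definition past_set :: "('a \<Rightarrow> 'a \<Rightarrow> ennreal) \<Rightarrow> 'a set \<Rightarrow> bool" where
  "past_set t P \<longleftrightarrow> P = Ipast_set t P"

definition future_set :: "('a \<Rightarrow> 'a \<Rightarrow> ennreal) \<Rightarrow> 'a set \<Rightarrow> bool" where
  "future_set t F \<longleftrightarrow> F = Ifut_set t F"

definition common_past :: "('a \<Rightarrow> 'a \<Rightarrow> ennreal) \<Rightarrow> 'a set \<Rightarrow> 'a set" where
  "common_past t S = Ipast_set t {p. \<forall>q\<in>S. chr t p q}"

definition common_future :: "('a \<Rightarrow> 'a \<Rightarrow> ennreal) \<Rightarrow> 'a set \<Rightarrow> 'a set" where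
  "common_future t S = Ifut_set t {p. \<forall>q\<in>S. chr t q p}"

definition IP :: "('a \<Rightarrow> 'a \<Rightarrow> ennreal) \<Rightarrow> 'a set \<Rightarrow> bool" where
  "IP t P \<longleftrightarrow> past_set t P \<and>
     \<not> (\<exists>A B. past_set t A \<and> past_set t B \<and> A \<subset> P \<and> B \<subset> P \<and> P = A \<union> B)"

definition IF :: "('a \<Rightarrow> 'a \<Rightarrow> ennreal) \<Rightarrow> 'a set \<Rightarrow> bool" where
  "IF t F \<longleftrightarrow> future_set t F \<and>
     \<not> (\<exists>A B. future_set t A \<and> future_set t B \<and> A \<subset> F \<and> B \<subset> F \<and> F = A \<union> B)"

definition PIP :: "('a \<Rightarrow> 'a \<Rightarrow> ennreal) \<Rightarrow> 'a set \<Rightarrow> bool" where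
  "PIP t P \<longleftrightarrow> IP t P \<and> (\<exists>p. P = Ipast t p)"

definition PIF :: "('a \<Rightarrow> 'a \<Rightarrow> ennreal) \<Rightarrow> 'a set \<Rightarrow> bool" where
  "PIF t F \<longleftrightarrow> IF t F \<and> (\<exists>p. F = Ifut t p)"

definition maximal_IP_in :: "('a \<Rightarrow> 'a \<Rightarrow> ennreal) \<Rightarrow> 'a set \<Rightarrow> 'a set \<Rightarrow> bool" where
  "maximal_IP_in t P A \<longleftrightarrow> IP t P \<and> P \<subseteq> A \<and>
     (\<forall>P'. IP t P' \<and> P \<subseteq> P' \<and> P' \<subseteq> A \<longrightarrow> P' = P)"

definition maximal_IF_in :: "('a \<Rightarrow> 'a \<Rightarrow> ennreal) \<Rightarrow> 'a set \<Rightarrow> 'a set \<Rightarrow> bool" where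
  "maximal_IF_in t F A \<longleftrightarrow> IF t F \<and> F \<subseteq> A \<and>
     (\<forall>F'. IF t F' \<and> F \<subseteq> F' \<and> F' \<subseteq> A \<longrightarrow> F' = F)"

definition Srel0 :: "('a \<Rightarrow> 'a \<Rightarrow> ennreal) \<Rightarrow> 'a set \<Rightarrow> 'a set \<Rightarrow> bool" where
  "Srel0 t P F \<longleftrightarrow> P \<noteq> {} \<and> F \<noteq> {} \<and> IP t P \<and> IF t F \<and>
     maximal_IP_in t P (common_past t F) \<and> maximal_IF_in t F (common_future t P)"

definition Srel :: "('a \<Rightarrow> 'a \<Rightarrow> ennreal) \<Rightarrow> 'a set \<Rightarrow> 'a set \<Rightarrow> bool" where
  "Srel t P F \<longleftrightarrow> Srel0 t P F \<or>
     (P \<noteq> {} \<and> IP t P \<and> F = {} \<and> \<not> (\<exists>F'. Srel0 t P F')) \<or>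
     (P = {} \<and> F \<noteq> {} \<and> IF t F \<and> \<not> (\<exists>P'. Srel0 t P' F))"

definition S_property :: "('a \<Rightarrow> 'a \<Rightarrow> ennreal) \<Rightarrow> 'a set \<Rightarrow> bool" where
  "S_property t X \<longleftrightarrow> (\<forall>x\<in>X. Srel t (Ipast t x) (Ifut t x) \<and>
      (\<forall>F. PIF t F \<and> Srel t (Ipast t x) F \<longrightarrow> F = Ifut t x) \<and>
      (\<forall>P. PIP t P \<and> Srel t P (Ifut t x) \<longrightarrow> P = Ipast t x))"

definition cbar :: "('a \<Rightarrow> 'a \<Rightarrow> ennreal) \<Rightarrow> ('a set \<times> 'a set) set" where
  "cbar t = {(P, F). Srel t P F}"

definition LI :: "(nat \<Rightarrow> 'a set) \<Rightarrow> 'a set" where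
  "LI A = (\<Union>n. \<Inter>k\<in>{n..}. A k)"

definition LS :: "(nat \<Rightarrow> 'a set) \<Rightarrow> 'a set" where
  "LS A = (\<Inter>n. \<Union>k\<in>{n..}. A k)"

definition Llim :: "('a \<Rightarrow> 'a \<Rightarrow> ennreal) \<Rightarrow> (nat \<Rightarrow> 'a set \<times> 'a set) \<Rightarrow> ('a set \<times> 'a set) set" where
  "Llim t s = {(P, F) \<in> cbar t.
      (P \<noteq> {} \<longrightarrow> P \<subseteq> LI (\<lambda>n. fst (s n)) \<and> maximal_IP_in t P (LS (\<lambda>n. fst (s n)))) \<and>
      (F \<noteq> {} \<longrightarrow> F \<subseteq> LI (\<lambda>n. snd (s n)) \<and> maximal_IF_in t F (LS (\<lambda>n. snd (s n))))}"

text \<open>Chronological topology: closed sets C are those with L(s) \<subseteq> C for every sequence s in C;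
  the open sets are their complements in the c-completion.\<close>
definition chr_topology :: "('a \<Rightarrow> 'a \<Rightarrow> ennreal) \<Rightarrow> ('a set \<times> 'a set) topology" where
  "chr_topology t = topology (\<lambda>U. U \<subseteq> cbar t \<and>
      (\<forall>s. range s \<subseteq> cbar t - U \<longrightarrow> Llim t s \<subseteq> cbar t - U))"

text \<open>Extended time separation; the chains are chosen by Hilbert choice (the value is
  independent of the choice in a separable space).\<close>
definition taubar :: "('a \<Rightarrow> 'a \<Rightarrow> ennreal) \<Rightarrow> ('a set \<times> 'a set) \<Rightarrow> ('a set \<times> 'a set) \<Rightarrow> ennreal" where
  "taubar t a b = (if snd a = {} \<or> fst b = {} then 0 else
     (let q = (SOME q. past_chain t q \<and> snd a = Ifut_set t (range q));
          p = (SOME p. future_chain t p \<and> fst b = Ipast_set t (range p))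
      in lim (\<lambda>n. t (q n) (p n))))"

end

theory Submission
  imports Defs
begin


locale lms0 =
  fixes t :: "'a \<Rightarrow> 'a \<Rightarrow> ennreal"
  assumes tri: "\<And>x y z. 0 < t x y \<Longrightarrow> 0 < t y z \<Longrightarrow> t x y + t y z \<le> t x z"
    and sep: "separable_lms t"
begin

lemma chr_trans: "chr t x y \<Longrightarrow> chr t y z \<Longrightarrow> chr t x z"
proof -
  assume a: "chr t x y" "chr t y z"
  then have "t x y + t y z \<le> t x z" using tri by (simp add: chr_def)
  then have "t x y \<le> t x z" using order_trans[OF add_increasing2[OF zero_le order_refl]] by blast
  then show "chr t x z" using a by (simp add: chr_def less_le_trans)
qed

lemma interp: "chr t x y \<Longrightarrow> \<exists>s. chr t x s \<and> chr t s y"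
  using sep unfolding separable_lms_def by blast

lemma tau_mono: assumes "chr t x' x" "chr t y y'" shows "t x y \<le> t x' y'"
proof (cases "t x y = 0")
  case True then show ?thesis by simp
next
  case False
  then have p: "0 < t x y" by (simp add: zero_less_iff_neq_zero) 
  have 1: "t x y + t y y' \<le> t x y'" using tri[OF p] assms(2) by (simp add: chr_def)
  then have 2: "t x y \<le> t x y'" using order_trans[OF add_increasing2[OF zero_le order_refl]] by blast
  have "0 < t x y'" using p 2 by (rule less_le_trans)
  then have "t x' x + t x y' \<le> t x' y'" using tri assms(1) by (simp add: chr_def)
  then have "t x y' \<le> t x' y'" using order_trans[OF add_increasing[OF zero_le order_refl]] by blast
  with 2 show ?thesis by simp
qed

lemma Ifut_set_future: "future_set t (Ifut_set t A)"
  unfolding future_set_def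
proof
  show "Ifut_set t A \<subseteq> Ifut_set t (Ifut_set t A)"
  proof
    fix y assume "y \<in> Ifut_set t A"
    then obtain a where a: "a \<in> A" "chr t a y" by (auto simp: Ifut_set_def Ifut_def)
    then obtain s where "chr t a s" "chr t s y" using interp by blast
    with a show "y \<in> Ifut_set t (Ifut_set t A)" by (auto simp: Ifut_set_def Ifut_def)
  qed
  show "Ifut_set t (Ifut_set t A) \<subseteq> Ifut_set t A"
    by (auto simp: Ifut_set_def Ifut_def intro: chr_trans)
qed

lemma IF_directed:
  assumes F: "IF t F" and pq: "p \<in> F" "q \<in> F"
  shows "\<exists>r\<in>F. chr t r p \<and> chr t r q"
proof (rule ccontr)
  assume H: "\<not> ?thesis"
  have fs: "F = Ifut_set t F" using F by (simp add: IF_def future_set_def)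
  define A where "A = Ifut_set t (F \<inter> Ipast t p)"
  define B where "B = Ifut_set t (F - Ipast t p)"
  have fA: "future_set t A" "future_set t B" by (simp_all add: A_def B_def Ifut_set_future)
  have "A \<subseteq> Ifut_set t F" "B \<subseteq> Ifut_set t F" by (auto simp: A_def B_def Ifut_set_def)
  then have AF: "A \<subseteq> F" "B \<subseteq> F" using fs by auto
  have "Ifut_set t F = A \<union> B" by (auto simp: A_def B_def Ifut_set_def)
  then have U: "F = A \<union> B" using fs by simp
  have "q \<notin> A" using H by (auto simp: A_def Ifut_set_def Ifut_def Ipast_def)
  moreover have "p \<notin> B" by (auto simp: B_def Ifut_set_def Ifut_def Ipast_def)
  ultimately have "A \<subset> F" "B \<subset> F" using AF pq by auto
  with fA U F show False unfolding IF_def by blast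
qed

lemma IF_chain:
  assumes F: "IF t F" and ne: "F \<noteq> {}"
  shows "\<exists>q. past_chain t q \<and> F = Ifut_set t (range q)"
proof -
  obtain S where S: "countable S" "\<And>x y. chr t x y \<Longrightarrow> \<exists>s\<in>S. chr t x s \<and> chr t s y"
    using sep unfolding separable_lms_def by blast
  have fs: "F = Ifut_set t F" using F by (simp add: IF_def future_set_def)
  obtain f0 where f0: "f0 \<in> F" using ne by blast
  have inF: "y \<in> F" if "x \<in> F" "chr t x y" for x y
    using that fs by (auto simp: Ifut_set_def Ifut_def)
  have exF: "\<exists>x\<in>F. chr t x y" if "y \<in> F" for y
    using that fs by (subst (asm) fs) (auto simp: Ifut_set_def Ifut_def)
  obtain g0 where "g0 \<in> F" "chr t g0 f0" using exF f0 by blast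
  then obtain s0 where "s0 \<in> S" "chr t g0 s0" "chr t s0 f0" using S(2) by blast
  then have s0: "s0 \<in> S \<inter> F" using inF \<open>g0 \<in> F\<close> by blast
  define e where "e = from_nat_into (S \<inter> F)"
  have eSF: "e n \<in> S \<inter> F" for n using s0 unfolding e_def by (metis empty_iff from_nat_into)
  have esurj: "\<exists>n. e n = s" if "s \<in> S \<inter> F" for s
    using that S(1) unfolding e_def by (simp add: from_nat_into_surj)
  have ex: "\<And>x y. x \<in> F \<Longrightarrow> y \<in> F \<Longrightarrow> \<exists>r. r \<in> F \<and> chr t r x \<and> chr t r y"
    using IF_directed[OF F] by blast
  then obtain g where g: "\<And>x y. x \<in> F \<Longrightarrow> y \<in> F \<Longrightarrow> g x y \<in> F \<and> chr t (g x y) x \<and> chr t (g x y) y"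
    by metis
  define q where "q = rec_nat f0 (\<lambda>n x. g x (e n))"
  have q0: "q 0 = f0" and qS: "q (Suc n) = g (q n) (e n)" for n by (simp_all add: q_def)
  have qF: "q n \<in> F" for n
    by (induction n) (use f0 g eSF in \<open>auto simp: q0 qS\<close>)
  have qc: "past_chain t q" unfolding past_chain_def using g qF eSF by (simp add: qS)
  have "F = Ifut_set t (range q)"
  proof
    show "Ifut_set t (range q) \<subseteq> F" using qF inF by (auto simp: Ifut_set_def Ifut_def)
    show "F \<subseteq> Ifut_set t (range q)"
    proof
      fix y assume "y \<in> F"
      then obtain x where x: "x \<in> F" "chr t x y" using exF by blast
      then obtain s where s: "s \<in> S" "chr t x s" "chr t s y" using S(2) by blast
      then have "s \<in> S \<inter> F" using inF x by blast
      then obtain n where n: "e n = s" using esurj by blast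
      have "chr t (q (Suc n)) (e n)" using g qF eSF by (simp add: qS)
      then have "chr t (q (Suc n)) y" using n s chr_trans by blast
      then show "y \<in> Ifut_set t (range q)" by (auto simp: Ifut_set_def Ifut_def)
    qed
  qed
  with qc show ?thesis by blast
qed

lemma past_chain_lt: "past_chain t q \<Longrightarrow> m < j \<Longrightarrow> chr t (q j) (q m)"
proof (induction j)
  case 0 then show ?case by simp
next
  case (Suc j)
  have c: "chr t (q (Suc j)) (q j)" using Suc.prems(1) by (simp add: past_chain_def)
  show ?case
  proof (cases "m = j")
    case True then show ?thesis using c by simp
  next
    case False then have "m < j" using Suc.prems(2) by simp
    then show ?thesis using Suc.IH[OF Suc.prems(1)] c chr_trans by blast
  qed
qed

lemma chain_incseq:
  assumes "past_chain t q" "future_chain t p"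
  shows "incseq (\<lambda>n. t (q n) (p n))"
  using assms by (intro incseq_SucI tau_mono) (auto simp: past_chain_def future_chain_def)

end

definition trev where "trev t = (\<lambda>x y. t y x)"

lemma (in lms0) lms0_rev: "lms0 (trev t)"
proof
  show "trev t x y + trev t y z \<le> trev t x z" if "0 < trev t x y" "0 < trev t y z" for x y z
    using tri[of z y x] that by (simp add: trev_def add.commute)
  show "separable_lms (trev t)" using sep unfolding separable_lms_def chr_def trev_def
    by (metis (no_types, lifting))
qed

lemma rev_eqs:
  "IP t P = IF (trev t) P" "future_chain t p = past_chain (trev t) p"
  "Ipast_set t A = Ifut_set (trev t) A"
  by (simp_all add: IP_def IF_def past_set_def future_set_def Ipast_set_def Ifut_set_def
      Ipast_def Ifut_def chr_def trev_def future_chain_def past_chain_def)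

lemma (in lms0) IP_chain:
  assumes "IP t P" "P \<noteq> {}"
  shows "\<exists>p. future_chain t p \<and> P = Ipast_set t (range p)"
  using lms0.IF_chain[OF lms0_rev] assms by (simp add: rev_eqs)

lemma (in lms0) future_chain_lt: "future_chain t p \<Longrightarrow> m < j \<Longrightarrow> chr t (p m) (p j)"
  using lms0.past_chain_lt[OF lms0_rev, of p m j] by (simp add: rev_eqs) (simp add: chr_def trev_def)



lemma LI_sub: "strict_mono r \<Longrightarrow> LI A \<subseteq> LI (\<lambda>n. A (r n))"
  unfolding LI_def
proof
  fix x assume r: "strict_mono r" and "x \<in> (\<Union>n. \<Inter>k\<in>{n..}. A k)"
  then obtain n where n: "\<And>k. k \<ge> n \<Longrightarrow> x \<in> A k" by auto
  have "x \<in> A (r k)" if "k \<ge> n" for k using n[of "r k"] seq_suble[OF r, of k] that by simp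
  then show "x \<in> (\<Union>n. \<Inter>k\<in>{n..}. A (r k))" by auto
qed

lemma LS_sub: "strict_mono r \<Longrightarrow> LS (\<lambda>n. A (r n)) \<subseteq> LS A"
  unfolding LS_def
proof
  fix x assume r: "strict_mono r" and x: "x \<in> (\<Inter>n. \<Union>k\<in>{n..}. A (r k))"
  show "x \<in> (\<Inter>n. \<Union>k\<in>{n..}. A k)"
  proof
    fix n
    obtain k where "k \<ge> n" "x \<in> A (r k)" using x by auto
    then show "x \<in> (\<Union>k\<in>{n..}. A k)" using seq_suble[OF r, of k] by auto
  qed
qed

lemma LI_LS: "LI A \<subseteq> LS A"
  unfolding LI_def LS_def
proof
  fix x assume "x \<in> (\<Union>n. \<Inter>k\<in>{n..}. A k)"
  then obtain n where n: "\<And>k. k \<ge> n \<Longrightarrow> x \<in> A k" by auto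
  show "x \<in> (\<Inter>n. \<Union>k\<in>{n..}. A k)"
  proof
    fix m show "x \<in> (\<Union>k\<in>{m..}. A k)" using n[of "max n m"] by auto
  qed
qed

lemma maxIP_sub: "maximal_IP_in t P A \<Longrightarrow> P \<subseteq> B \<Longrightarrow> B \<subseteq> A \<Longrightarrow> maximal_IP_in t P B"
  unfolding maximal_IP_in_def by blast

lemma maxIF_sub: "maximal_IF_in t P A \<Longrightarrow> P \<subseteq> B \<Longrightarrow> B \<subseteq> A \<Longrightarrow> maximal_IF_in t P B"
  unfolding maximal_IF_in_def by blast

lemma Llim_iff: "(P, F) \<in> Llim t s \<longleftrightarrow> (P, F) \<in> cbar t \<and>
      (P \<noteq> {} \<longrightarrow> P \<subseteq> LI (\<lambda>n. fst (s n)) \<and> maximal_IP_in t P (LS (\<lambda>n. fst (s n)))) \<and>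
      (F \<noteq> {} \<longrightarrow> F \<subseteq> LI (\<lambda>n. snd (s n)) \<and> maximal_IF_in t F (LS (\<lambda>n. snd (s n))))"
  unfolding Llim_def by simp

lemma Llim_subseq: assumes r: "strict_mono r" shows "Llim t s \<subseteq> Llim t (\<lambda>n. s (r n))"
proof
  fix z assume z: "z \<in> Llim t s"
  obtain P F where zPF: "z = (P, F)" by (cases z)
  have z': "(P, F) \<in> Llim t s" using z zPF by simp
  let ?A = "\<lambda>n. fst (s n)" and ?B = "\<lambda>n. snd (s n)"
  have P: "P \<subseteq> LI (\<lambda>n. ?A (r n)) \<and> maximal_IP_in t P (LS (\<lambda>n. ?A (r n)))" if "P \<noteq> {}"
  proof -
    have a: "P \<subseteq> LI ?A" "maximal_IP_in t P (LS ?A)" using z' that unfolding Llim_iff by blast+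
    have b: "P \<subseteq> LI (\<lambda>n. ?A (r n))" using a(1) LI_sub[OF r, of ?A] by (rule order_trans)
    have c: "P \<subseteq> LS (\<lambda>n. ?A (r n))" using b LI_LS by (rule order_trans)
    show ?thesis using b maxIP_sub[OF a(2) c LS_sub[OF r, of ?A]] by simp
  qed
  have F: "F \<subseteq> LI (\<lambda>n. ?B (r n)) \<and> maximal_IF_in t F (LS (\<lambda>n. ?B (r n)))" if "F \<noteq> {}"
  proof -
    have a: "F \<subseteq> LI ?B" "maximal_IF_in t F (LS ?B)" using z' that unfolding Llim_iff by blast+
    have b: "F \<subseteq> LI (\<lambda>n. ?B (r n))" using a(1) LI_sub[OF r, of ?B] by (rule order_trans)
    have c: "F \<subseteq> LS (\<lambda>n. ?B (r n))" using b LI_LS by (rule order_trans)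
    show ?thesis using b maxIF_sub[OF a(2) c LS_sub[OF r, of ?B]] by simp
  qed
  have "(P, F) \<in> cbar t" using z' unfolding Llim_iff by blast
  then have "(P, F) \<in> Llim t (\<lambda>n. s (r n))" using P F unfolding Llim_iff by simp
  then show "z \<in> Llim t (\<lambda>n. s (r n))" using zPF by simp
qed

definition chrop where "chrop t = (\<lambda>U. U \<subseteq> cbar t \<and>
      (\<forall>s. range s \<subseteq> cbar t - U \<longrightarrow> Llim t s \<subseteq> cbar t - U))"

lemma Llim_cbar: "Llim t s \<subseteq> cbar t" by (auto simp: Llim_def)

lemma chrop_closed: "chrop t U \<Longrightarrow> range s \<subseteq> cbar t - U \<Longrightarrow> Llim t s \<subseteq> cbar t - U"
  unfolding chrop_def by blast

lemma chrop_sub: "chrop t U \<Longrightarrow> U \<subseteq> cbar t"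
  unfolding chrop_def by blast

lemma istop: "istopology (chrop t)"
  unfolding istopology_def
proof (intro conjI allI impI)
  fix S T assume S: "chrop t S" and T: "chrop t T"
  show "chrop t (S \<inter> T)" unfolding chrop_def
  proof (intro conjI allI impI)
    show "S \<inter> T \<subseteq> cbar t" using chrop_sub[OF S] by blast
    fix s :: "nat \<Rightarrow> _" assume s: "range s \<subseteq> cbar t - S \<inter> T"
    have "{n. s n \<notin> S} \<union> {n. s n \<notin> T} = UNIV" using s by auto
    then have "infinite {n. s n \<notin> S} \<or> infinite {n. s n \<notin> T}"
    proof -
      assume u: "{n. s n \<notin> S} \<union> {n. s n \<notin> T} = UNIV"
      show ?thesis
      proof (rule ccontr)
        assume "\<not> ?thesis"
        then have "finite ({n. s n \<notin> S} \<union> {n. s n \<notin> T})" by simp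
        then have "finite (UNIV :: nat set)" by (simp only: u)
        then show False by simp
      qed
    qed
    then show "Llim t s \<subseteq> cbar t - S \<inter> T"
    proof
      assume inf: "infinite {n. s n \<notin> S}"
      obtain r :: "nat \<Rightarrow> nat" where r0: "strict_mono r" "\<forall>n. r n \<in> {n. s n \<notin> S}"
        using infinite_enumerate[OF inf] by iprover
      have r: "strict_mono r" "\<And>n. s (r n) \<notin> S" using r0 by auto
      have "range (\<lambda>n. s (r n)) \<subseteq> cbar t - S"
      proof (rule image_subsetI)
        fix n
        have "s (r n) \<in> cbar t" using s by (simp add: image_subset_iff)
        then show "s (r n) \<in> cbar t - S" using r(2)[of n] by simp
      qed
      then have "Llim t (\<lambda>n. s (r n)) \<subseteq> cbar t - S" by (rule chrop_closed[OF S])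
      then show ?thesis using Llim_subseq[OF r(1), of t s] by blast
    next
      assume inf: "infinite {n. s n \<notin> T}"
      obtain r :: "nat \<Rightarrow> nat" where r0: "strict_mono r" "\<forall>n. r n \<in> {n. s n \<notin> T}"
        using infinite_enumerate[OF inf] by iprover
      have r: "strict_mono r" "\<And>n. s (r n) \<notin> T" using r0 by auto
      have "range (\<lambda>n. s (r n)) \<subseteq> cbar t - T"
      proof (rule image_subsetI)
        fix n
        have "s (r n) \<in> cbar t" using s by (simp add: image_subset_iff)
        then show "s (r n) \<in> cbar t - T" using r(2)[of n] by simp
      qed
      then have "Llim t (\<lambda>n. s (r n)) \<subseteq> cbar t - T" by (rule chrop_closed[OF T])
      then show ?thesis using Llim_subseq[OF r(1), of t s] by blast
    qed
  qed
next
  fix K assume K: "\<forall>S\<in>K. chrop t S"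
  show "chrop t (\<Union>K)" unfolding chrop_def
  proof (intro conjI allI impI)
    show "\<Union>K \<subseteq> cbar t" using K chrop_sub by blast
    fix s :: "nat \<Rightarrow> _" assume s: "range s \<subseteq> cbar t - \<Union>K"
    have "Llim t s \<subseteq> cbar t - S" if "S \<in> K" for S
    proof -
      have "range s \<subseteq> cbar t - S" using s that by blast
      then show ?thesis using K that chrop_closed[of t S s] by blast
    qed
    then show "Llim t s \<subseteq> cbar t - \<Union>K" using Llim_cbar by blast
  qed
qed

lemma openin_chr: "openin (chr_topology t) = chrop t"
proof -
  have "chr_topology t = topology (chrop t)" unfolding chr_topology_def chrop_def by simp
  then show ?thesis using topology_inverse'[OF istop[of t]] by simp
qed

lemma topspace_chr: "topspace (chr_topology t) = cbar t"
proof -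
  have "chrop t (cbar t)" by (auto simp: chrop_def)
  then show ?thesis unfolding topspace_def openin_chr by (auto simp: chrop_def)
qed

lemma open_F: "openin (chr_topology t) {a \<in> cbar t. x \<in> snd a}"
  unfolding openin_chr chrop_def
proof (intro conjI allI impI)
  show "{a \<in> cbar t. x \<in> snd a} \<subseteq> cbar t" by auto
  fix s :: "nat \<Rightarrow> _" assume s: "range s \<subseteq> cbar t - {a \<in> cbar t. x \<in> snd a}"
  show "Llim t s \<subseteq> cbar t - {a \<in> cbar t. x \<in> snd a}"
  proof
    fix z assume z: "z \<in> Llim t s"
    obtain P F where zPF: "z = (P, F)" by force
    have "x \<notin> F"
    proof
      assume x: "x \<in> F"
      then have "F \<subseteq> LI (\<lambda>n. snd (s n))" using z by (auto simp: zPF Llim_def)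
      then obtain n where "\<And>k. k \<ge> n \<Longrightarrow> x \<in> snd (s k)" using x unfolding LI_def by blast
      then have "x \<in> snd (s n)" by simp
      moreover have "s n \<in> cbar t - {a \<in> cbar t. x \<in> snd a}" using s by auto
      ultimately show False by auto
    qed
    then show "z \<in> cbar t - {a \<in> cbar t. x \<in> snd a}" using z Llim_cbar zPF by auto
  qed
qed

lemma open_P: "openin (chr_topology t) {a \<in> cbar t. x \<in> fst a}"
  unfolding openin_chr chrop_def
proof (intro conjI allI impI)
  show "{a \<in> cbar t. x \<in> fst a} \<subseteq> cbar t" by auto
  fix s :: "nat \<Rightarrow> _" assume s: "range s \<subseteq> cbar t - {a \<in> cbar t. x \<in> fst a}"
  show "Llim t s \<subseteq> cbar t - {a \<in> cbar t. x \<in> fst a}"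
  proof
    fix z assume z: "z \<in> Llim t s"
    obtain P F where zPF: "z = (P, F)" by force
    have "x \<notin> P"
    proof
      assume x: "x \<in> P"
      then have "P \<subseteq> LI (\<lambda>n. fst (s n))" using z by (auto simp: zPF Llim_def)
      then obtain n where "\<And>k. k \<ge> n \<Longrightarrow> x \<in> fst (s k)" using x unfolding LI_def by blast
      then have "x \<in> fst (s n)" by simp
      moreover have "s n \<in> cbar t - {a \<in> cbar t. x \<in> fst a}" using s by auto
      ultimately show False by auto
    qed
    then show "z \<in> cbar t - {a \<in> cbar t. x \<in> fst a}" using z Llim_cbar zPF by auto
  qed
qed



definition qch where "qch t F = (SOME q. past_chain t q \<and> F = Ifut_set t (range q))"
definition pch where "pch t P = (SOME p. future_chain t p \<and> P = Ipast_set t (range p))"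

lemma taubar_eq: "taubar t a b = (if snd a = {} \<or> fst b = {} then 0 else
    lim (\<lambda>n. t (qch t (snd a) n) (pch t (fst b) n)))"
  by (simp add: taubar_def qch_def pch_def Let_def)

lemma (in lms0) qch: assumes "IF t F" "F \<noteq> {}" shows "past_chain t (qch t F) \<and> F = Ifut_set t (range (qch t F))"
  unfolding qch_def using someI_ex[OF IF_chain[OF assms]] .

lemma (in lms0) pch: assumes "IP t P" "P \<noteq> {}" shows "future_chain t (pch t P) \<and> P = Ipast_set t (range (pch t P))"
  unfolding pch_def using someI_ex[OF IP_chain[OF assms]] .

lemma (in lms0) lim_SUP: "past_chain t q \<Longrightarrow> future_chain t p \<Longrightarrow>
    lim (\<lambda>n. t (q n) (p n)) = (SUP n. t (q n) (p n))"
  by (rule limI) (rule LIMSEQ_SUP[OF chain_incseq])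

lemma cbar_IF: "a \<in> cbar t \<Longrightarrow> snd a \<noteq> {} \<Longrightarrow> IF t (snd a)"
  by (cases a) (auto simp: cbar_def Srel_def Srel0_def)

lemma cbar_IP: "a \<in> cbar t \<Longrightarrow> fst a \<noteq> {} \<Longrightarrow> IP t (fst a)"
  by (cases a) (auto simp: cbar_def Srel_def Srel0_def)

lemma cbar_Srel0: "a \<in> cbar t \<Longrightarrow> fst a \<noteq> {} \<Longrightarrow> snd a \<noteq> {} \<Longrightarrow> Srel0 t (fst a) (snd a)"
  by (cases a) (auto simp: cbar_def Srel_def)

context lms0 begin

lemma qch_a: "a \<in> cbar t \<Longrightarrow> snd a \<noteq> {} \<Longrightarrow> past_chain t (qch t (snd a)) \<and> snd a = Ifut_set t (range (qch t (snd a)))"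
  using qch cbar_IF by blast

lemma pch_b: "b \<in> cbar t \<Longrightarrow> fst b \<noteq> {} \<Longrightarrow> future_chain t (pch t (fst b)) \<and> fst b = Ipast_set t (range (pch t (fst b)))"
  using pch cbar_IP by blast

lemma taubar_SUP: "a \<in> cbar t \<Longrightarrow> b \<in> cbar t \<Longrightarrow> snd a \<noteq> {} \<Longrightarrow> fst b \<noteq> {} \<Longrightarrow>
   taubar t a b = (SUP n. t (qch t (snd a) n) (pch t (fst b) n))"
  using qch_a[of a] pch_b[of b] lim_SUP by (simp add: taubar_eq)

lemma taubar_pos: "0 < taubar t a b \<Longrightarrow> snd a \<noteq> {} \<and> fst b \<noteq> {}"
  by (auto simp: taubar_eq split: if_splits)

lemma q_in: "past_chain t q \<Longrightarrow> q n \<in> Ifut_set t (range q)"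
  unfolding past_chain_def Ifut_set_def Ifut_def by blast

lemma p_in: "future_chain t p \<Longrightarrow> p n \<in> Ipast_set t (range p)"
  unfolding future_chain_def Ipast_set_def Ipast_def by blast

lemma lsc: "lsc_on (prod_topology (chr_topology t) (chr_topology t)) (\<lambda>(x, y). taubar t x y)"
  unfolding lsc_on_def
proof (intro ballI allI impI)
  fix z r assume z: "z \<in> topspace (prod_topology (chr_topology t) (chr_topology t))"
    and r: "r < (case z of (x, y) \<Rightarrow> taubar t x y)"
  obtain a b where zab: "z = (a, b)" by (cases z)
  have ab: "a \<in> cbar t" "b \<in> cbar t" using z zab by (auto simp: topspace_chr)
  have r': "r < taubar t a b" using r zab by simp
  then have "0 < taubar t a b" by (metis not_less_zero not_gr_zero) 
  then have ne: "snd a \<noteq> {}" "fst b \<noteq> {}" using taubar_pos by auto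
  define q where "q = qch t (snd a)"
  define p where "p = pch t (fst b)"
  have qa: "past_chain t q" "snd a = Ifut_set t (range q)" using qch_a[OF ab(1) ne(1)] q_def by auto
  have pb: "future_chain t p" "fst b = Ipast_set t (range p)" using pch_b[OF ab(2) ne(2)] p_def by auto
  have "r < (SUP n. t (q n) (p n))" using r' taubar_SUP[OF ab ne] q_def p_def by simp
  then obtain n where n: "r < t (q n) (p n)" by (auto simp: less_SUP_iff)
  define U where "U = {a' \<in> cbar t. q n \<in> snd a'} \<times> {b' \<in> cbar t. p n \<in> fst b'}"
  show "\<exists>U. openin (prod_topology (chr_topology t) (chr_topology t)) U \<and> z \<in> U \<and>
           (\<forall>y\<in>U. r < (case y of (x, y) \<Rightarrow> taubar t x y))"
  proof (intro exI conjI ballI)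
    show "openin (prod_topology (chr_topology t) (chr_topology t)) U"
      unfolding U_def openin_prod_Times_iff using open_F[of t "q n"] open_P[of t "p n"] by simp
    show "z \<in> U" unfolding U_def zab using ab qa pb q_in[OF qa(1)] p_in[OF pb(1)] by simp
    fix y assume y: "y \<in> U"
    obtain a' b' where yab: "y = (a', b')" by (cases y)
    have ab': "a' \<in> cbar t" "b' \<in> cbar t" "q n \<in> snd a'" "p n \<in> fst b'" using y yab U_def by auto
    then have ne': "snd a' \<noteq> {}" "fst b' \<noteq> {}" by auto
    define q' where "q' = qch t (snd a')"
    define p' where "p' = pch t (fst b')"
    have qa': "past_chain t q'" "snd a' = Ifut_set t (range q')" using qch_a[OF ab'(1) ne'(1)] q'_def by auto
    have pb': "future_chain t p'" "fst b' = Ipast_set t (range p')" using pch_b[OF ab'(2) ne'(2)] p'_def by auto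
    obtain m where m: "chr t (q' m) (q n)" using ab'(3) qa'(2) by (auto simp: Ifut_set_def Ifut_def)
    obtain k where k: "chr t (p n) (p' k)" using ab'(4) pb'(2) by (auto simp: Ipast_set_def Ipast_def)
    define j where "j = Suc (m + k)"
    have "chr t (q' j) (q' m)" using past_chain_lt[OF qa'(1)] j_def by simp
    then have c1: "chr t (q' j) (q n)" using m chr_trans by blast
    have "chr t (p' k) (p' j)" using future_chain_lt[OF pb'(1)] j_def by simp
    then have c2: "chr t (p n) (p' j)" using k chr_trans by blast
    have "t (q n) (p n) \<le> t (q' j) (p' j)" using tau_mono[OF c1 c2] .
    also have "\<dots> \<le> (SUP n. t (q' n) (p' n))" by (rule SUP_upper) simp
    also have "\<dots> = taubar t a' b'" using taubar_SUP[OF ab'(1,2) ne'] q'_def p'_def by simp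
    finally show "r < (case y of (x, y) \<Rightarrow> taubar t x y)" using n yab by simp
  qed
qed

lemma triangle:
  assumes abc: "a \<in> cbar t" "b \<in> cbar t" "c \<in> cbar t"
    and pos: "0 < taubar t a b" "0 < taubar t b c"
  shows "taubar t a b + taubar t b c \<le> taubar t a c"
proof -
  have ne: "snd a \<noteq> {}" "fst b \<noteq> {}" "snd b \<noteq> {}" "fst c \<noteq> {}" using taubar_pos pos by auto
  define qa where "qa = qch t (snd a)"
  define pb where "pb = pch t (fst b)"
  define qb where "qb = qch t (snd b)"
  define pc where "pc = pch t (fst c)"
  have qa: "past_chain t qa" using qch_a[OF abc(1) ne(1)] qa_def by auto
  have pb: "future_chain t pb" "fst b = Ipast_set t (range pb)" using pch_b[OF abc(2) ne(2)] pb_def by auto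
  have qb: "past_chain t qb" "snd b = Ifut_set t (range qb)" using qch_a[OF abc(2) ne(3)] qb_def by auto
  have pc: "future_chain t pc" using pch_b[OF abc(3) ne(4)] pc_def by auto
  define A where "A = (\<lambda>n. t (qa n) (pb n))"
  define B where "B = (\<lambda>n. t (qb n) (pc n))"
  define C where "C = (\<lambda>n. t (qa n) (pc n))"
  have iA: "incseq A" unfolding A_def by (rule chain_incseq[OF qa pb(1)])
  have iB: "incseq B" unfolding B_def by (rule chain_incseq[OF qb(1) pc])
  have tab: "taubar t a b = (SUP n. A n)" using taubar_SUP[OF abc(1,2) ne(1,2)] A_def qa_def pb_def by simp
  have tbc: "taubar t b c = (SUP n. B n)" using taubar_SUP[OF abc(2,3) ne(3,4)] B_def qb_def pc_def by simp
  have tac: "taubar t a c = (SUP n. C n)" using taubar_SUP[OF abc(1,3) ne(1,4)] C_def qa_def pc_def by simp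
  have S0: "Srel0 t (fst b) (snd b)" using cbar_Srel0 abc(2) ne(2,3) by blast
  then have sub: "fst b \<subseteq> common_past t (snd b)" by (simp add: Srel0_def maximal_IP_in_def)
  have key: "chr t (pb n) (qb n)" for n
  proof -
    have "pb n \<in> fst b" using p_in[OF pb(1)] pb(2) by simp
    then have "pb n \<in> common_past t (snd b)" using sub by blast
    then obtain w where w: "chr t (pb n) w" "\<forall>x\<in>snd b. chr t w x"
      by (auto simp: common_past_def Ipast_set_def Ipast_def)
    have "qb n \<in> snd b" using q_in[OF qb(1)] qb(2) by simp
    then show ?thesis using w chr_trans by blast
  qed
  obtain n1 where n1: "0 < A n1" using pos(1) tab by (auto simp: less_SUP_iff)
  obtain n2 where n2: "0 < B n2" using pos(2) tab tbc by (auto simp: less_SUP_iff)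
  define N where "N = n1 + n2"
  have step: "A n + B n \<le> C (n + N)" for n
  proof -
    define m where "m = n + N"
    have Am: "0 < A m" using n1 iA[unfolded incseq_def, rule_format, of n1 m] m_def N_def by simp
    have Bm: "0 < B m" using n2 iB[unfolded incseq_def, rule_format, of n2 m] m_def N_def by simp
    have k: "0 < t (pb m) (qb m)" using key[of m] by (simp add: chr_def)
    have "t (pb m) (qb m) + B m \<le> t (pb m) (pc m)" using tri[OF k] Bm by (simp add: B_def)
    then have 1: "B m \<le> t (pb m) (pc m)" using order_trans[OF add_increasing[OF zero_le order_refl]] by blast
    then have "0 < t (pb m) (pc m)" using Bm by simp
    then have "A m + t (pb m) (pc m) \<le> C m" using tri Am by (simp add: A_def C_def)
    then have 2: "A m + B m \<le> C m" using 1 by (meson add_left_mono order_trans)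
    have "A n + B n \<le> A m + B m" using iA iB m_def by (simp add: add_mono incseq_def)
    then show ?thesis using 2 m_def by simp
  qed
  have "(SUP n. A n + B n) \<le> (SUP n. C n)"
  proof (rule SUP_least)
    fix n show "A n + B n \<le> (SUP n. C n)" using step[of n] by (meson SUP_upper UNIV_I order_trans)
  qed
  moreover have "(SUP n. A n + B n) = (SUP n. A n) + (SUP n. B n)" by (rule ennreal_SUP_add[OF iA iB])
  ultimately show ?thesis using tab tbc tac by simp
qed

end

theorem mainTheorem1:
  fixes \<sigma> :: "'a topology" and \<tau> :: "'a \<Rightarrow> 'a \<Rightarrow> ennreal"
  assumes "lorentzian_metric_space \<sigma> \<tau>"
    and "topspace \<sigma> = UNIV"
    and "separable_lms \<tau>"
    and "chronologically_dense \<sigma> \<tau>"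
    and "S_property \<tau> (topspace \<sigma>)"
  shows "lorentzian_metric_space (chr_topology \<tau>) (taubar \<tau>)"
proof -
  interpret lms0 \<tau>
  proof
    show "\<tau> x y + \<tau> y z \<le> \<tau> x z" if "0 < \<tau> x y" "0 < \<tau> y z" for x y z
      using assms(1,2) that unfolding lorentzian_metric_space_def by blast
    show "separable_lms \<tau>" by (rule assms(3))
  qed
  show ?thesis unfolding lorentzian_metric_space_def topspace_chr
    using lsc triangle by blast
qed

end
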